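(* Let $x,y,z$ be real numbers with $0<x\le y\le z\le 1$, and let $$f(x,y,z)=x^{y}\,y^{-x}\,z^{x}\,x^{-z}\,y^{z}\,z^{-y}.$$ Then $f(x,y,z)\ge 1$, and equality $f(x,y,z)=1$ is possible only when $x=y$ or $y=z$. *)

theory Defs
  imports Complex_Main
begin

definition fxyz :: "real \<Rightarrow> real \<Rightarrow> real \<Rightarrow> real" where
  "fxyz x y z = x powr y * y powr (- x) * z powr x * x powr (- z) * y powr z * z powr (- y)"

end

theory Submission
  imports Defs
begin

lemma ln_strict: "0 < (t::real) \<Longrightarrow> t \<noteq> 1 \<Longrightarrow> ln t < t - 1"
  using ln_le_minus_one[of t] ln_eq_minus_one[of t] by fastforce

theorem lemma2:
  fixes x y z :: real
  assumes "0 < x" "x \<le> y" "y \<le> z" "z \<le> 1"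
  shows "fxyz x y z \<ge> 1 \<and> (fxyz x y z = 1 \<longrightarrow> x = y \<or> y = z)"
proof -
  have y0: "0 < y" and z0: "0 < z" using assms by auto
  define A where "A = ln y - ln x"
  define B where "B = ln z - ln y"
  define L where "L = (z - y) * A - (y - x) * B"
  have F1: "fxyz x y z = exp (y * ln x) * exp (- x * ln y) * exp (x * ln z) * exp (- z * ln x)
      * exp (z * ln y) * exp (- y * ln z)"
    unfolding fxyz_def using assms y0 z0 by (simp add: powr_def mult.commute)
  also have "\<dots> = exp (y * ln x + - x * ln y + x * ln z + - z * ln x + z * ln y + - y * ln z)"
    by (simp only: exp_add)
  also have "y * ln x + - x * ln y + x * ln z + - z * ln x + z * ln y + - y * ln z = L"
    unfolding L_def A_def B_def by (simp add: algebra_simps)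
  finally have F: "fxyz x y z = exp L" .
  have hA: "A \<ge> (y - x) / y"
    using ln_diff_le[of x y] assms y0 unfolding A_def by (simp add: field_simps)
  have hB: "B \<le> (z - y) / y"
    using ln_diff_le[of z y] z0 y0 unfolding B_def by simp
  have "L \<ge> (z - y) * ((y - x) / y) - (y - x) * ((z - y) / y)"
    unfolding L_def using hA hB assms
    by (intro diff_mono mult_left_mono) auto
  hence L0: "L \<ge> 0" by simp
  have strict: "L > 0" if "x < y" "y < z"
  proof -
    have "ln (x / y) < x / y - 1" using ln_strict[of "x/y"] that assms y0 by auto
    hence hA': "A > (y - x) / y"
      unfolding A_def using assms y0 by (simp add: ln_div field_simps)
    have "ln (z / y) < z / y - 1" using ln_strict[of "z/y"] that assms y0 by auto
    hence hB': "B < (z - y) / y"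
      unfolding B_def using z0 y0 by (simp add: ln_div field_simps)
    have "(z - y) * ((y - x) / y) < (z - y) * A" using hA' that by (intro mult_strict_left_mono) auto
    moreover have "(y - x) * B < (y - x) * ((z - y) / y)" using hB' that by (intro mult_strict_left_mono) auto
    ultimately have "L > (z - y) * ((y - x) / y) - (y - x) * ((z - y) / y)"
      unfolding L_def by (rule diff_strict_mono)
    thus ?thesis by simp
  qed
  show ?thesis
  proof
    show "fxyz x y z \<ge> 1" using F L0 by simp
    show "fxyz x y z = 1 \<longrightarrow> x = y \<or> y = z"
      using F strict assms by (metis exp_eq_one_iff less_irrefl order_le_less)
  qed
qed

end
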